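(* Let $f_{SH}(x)=\sqrt{\frac{x^2+1}{2}}-\frac{2x}{x+1}$ for $x\in(0,\infty)$, let $f_{SH}^*(u)=u\,f_{SH}\!\left(\frac{1-u}{u}\right)$ for $u\in(0,1)$, extended by continuity to $[0,1]$ (explicitly $f_{SH}^*(u)=\frac{\sqrt2}{2}\sqrt{u^2+(1-u)^2}-2u(1-u)$), and define $\overline M_{SH}(C_1,C_2)=E_X\{f_{SH}^*(P(C_2\mid x))\}$. Then $$P_e\le \frac12\left[1-\frac{2}{\sqrt2}\,\overline M_{SH}(C_1,C_2)\right].$$
   Context: Two-class decision problem: classes $C_1,C_2$, an observation $x$ in a space $\mathrm X$ with density $p(x)$, and a posteriori probabilities $P(C_1\mid x),P(C_2\mid x)\ge0$ with $P(C_1\mid x)+P(C_2\mid x)=1$. $E_X\{g(x)\}=\int_{\mathrm X} g(x)p(x)\,dx$. $P_e=E_X\{\min(P(C_1\mid x),P(C_2\mid x))\}$ is the Bayesian probability of error. *)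

theory Defs
  imports "HOL-Analysis.Analysis"
begin

text \<open>Expectation over the observation space X with density p (w.r.t. the
  reference measure M on X): E_X g = integral of g(x) p(x).\<close>
definition E_X :: "'a measure \<Rightarrow> ('a \<Rightarrow> real) \<Rightarrow> ('a \<Rightarrow> real) \<Rightarrow> real" where
  "E_X M p g = (LINT x|M. g x * p x)"

definition P_e :: "'a measure \<Rightarrow> ('a \<Rightarrow> real) \<Rightarrow> ('a \<Rightarrow> real) \<Rightarrow> ('a \<Rightarrow> real) \<Rightarrow> real" where
  "P_e M p P1 P2 = E_X M p (\<lambda>x. min (P1 x) (P2 x))"

definition f_SH :: "real \<Rightarrow> real" where
  "f_SH x = sqrt ((x\<^sup>2 + 1) / 2) - 2 * x / (x + 1)"

definition f_SH_star :: "real \<Rightarrow> real" where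
  "f_SH_star u = (if 0 < u \<and> u < 1 then u * f_SH ((1 - u) / u)
     else sqrt 2 / 2 * sqrt (u\<^sup>2 + (1 - u)\<^sup>2) - 2 * u * (1 - u))"

definition M_SH :: "'a measure \<Rightarrow> ('a \<Rightarrow> real) \<Rightarrow> ('a \<Rightarrow> real) \<Rightarrow> real" where
  "M_SH M p P2 = E_X M p (\<lambda>x. f_SH_star (P2 x))"

end

theory Submission
  imports Defs
begin

definition g :: "real \<Rightarrow> real" where "g u = sqrt 2 / 2 * sqrt (u\<^sup>2 + (1 - u)\<^sup>2) - 2 * u * (1 - u)"

lemma fstar_eq: assumes "0 \<le> u" "u \<le> 1" shows "f_SH_star u = g u"
proof (cases "0 < u \<and> u < 1")
  case True
  hence u: "0<u" "u<1" by auto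
  have t1: "(1-u)/u + 1 = 1/u" using u by (simp add: field_simps)
  have a: "u * sqrt ((((1-u)/u)\<^sup>2 + 1)/2) = sqrt 2 / 2 * sqrt (u\<^sup>2 + (1 - u)\<^sup>2)"
  proof -
    have "u * sqrt ((((1-u)/u)\<^sup>2 + 1)/2) = sqrt (u\<^sup>2 * ((((1-u)/u)\<^sup>2 + 1)/2))"
      using u real_sqrt_mult[of "u\<^sup>2" "(((1-u)/u)\<^sup>2 + 1)/2"] by simp
    also have "u\<^sup>2 * ((((1-u)/u)\<^sup>2 + 1)/2) = (u\<^sup>2 + (1 - u)\<^sup>2) / 2"
      using u by (simp add: field_simps power2_eq_square)
    also have "sqrt ((u\<^sup>2 + (1 - u)\<^sup>2) / 2) = sqrt (u\<^sup>2 + (1 - u)\<^sup>2) / sqrt 2"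
      by (simp add: real_sqrt_divide)
    also have "\<dots> = sqrt 2 / 2 * sqrt (u\<^sup>2 + (1 - u)\<^sup>2)"
      by (simp add: field_simps)
    finally show ?thesis .
  qed
  have b: "u * (2 * ((1-u)/u) / ((1-u)/u + 1)) = 2*u*(1-u)"
    using u by (simp add: t1 field_simps)
  show ?thesis using True a b unfolding f_SH_star_def f_SH_def g_def
    by (simp add: right_diff_distrib)
next
  case False
  thus ?thesis unfolding f_SH_star_def g_def by auto
qed

lemma lin_aux: "(a::real) \<le> b \<Longrightarrow> c / 2 \<le> a \<Longrightarrow> d = 1 - 2*q + r \<Longrightarrow> c = q - r \<Longrightarrow> (1 + q)/2 \<le> q + b + d/2"
  by (simp add: field_simps)

lemma key: assumes "0 \<le> w" "w \<le> 1"
  shows "sqrt ((1+w\<^sup>2)/2) \<le> w + sqrt 2 * (1 - w\<^sup>2)/2"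
proof -
  have r2: "sqrt 2 * sqrt 2 = 2" by simp
  have r: "sqrt 2 \<ge> 1" by simp
  have "w\<^sup>2 \<le> 1" using assms by (simp add: power_le_one)
  hence nn: "0 \<le> w + sqrt 2 * (1 - w\<^sup>2)/2" using assms by simp
  have "(1+w\<^sup>2)/2 \<le> (w + sqrt 2 * (1 - w\<^sup>2)/2)\<^sup>2"
  proof -
    have "(w + sqrt 2 * (1 - w\<^sup>2)/2)\<^sup>2 = w\<^sup>2 + sqrt 2 * w * (1-w\<^sup>2) + (sqrt 2 * sqrt 2) * (1-w\<^sup>2)\<^sup>2/4"
      by (simp add: power2_eq_square algebra_simps)
    also have "\<dots> = w\<^sup>2 + sqrt 2 * w * (1-w\<^sup>2) + (1-w\<^sup>2)\<^sup>2/2" by (simp only: r2)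
    finally have e: "(w + sqrt 2 * (1 - w\<^sup>2)/2)\<^sup>2 = w\<^sup>2 + sqrt 2 * w * (1-w\<^sup>2) + (1-w\<^sup>2)\<^sup>2/2" .
    have "sqrt 2 * w \<ge> 1 * w" using assms r by (intro mult_right_mono) auto
    hence "sqrt 2 * w * (1-w\<^sup>2) \<ge> w * (1 - w\<^sup>2)"
      using assms by (intro mult_right_mono) (auto simp: power_le_one)
    moreover have "w\<^sup>2/2 \<le> w" using assms mult_left_mono[of w 2 w] by (simp add: power2_eq_square)
    hence "w\<^sup>2/2 * (1-w\<^sup>2) \<le> w * (1-w\<^sup>2)" using assms
      by (intro mult_right_mono) (auto simp: power_le_one)
    hence "w * (1-w\<^sup>2) \<ge> w\<^sup>2*(1-w\<^sup>2)/2" by simp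
    moreover have "(1-w\<^sup>2)\<^sup>2 = 1 - 2*w\<^sup>2 + w\<^sup>2*w\<^sup>2" by (simp add: power2_eq_square algebra_simps)
    moreover have "w\<^sup>2*(1-w\<^sup>2) = w\<^sup>2 - w\<^sup>2*w\<^sup>2" by (simp add: algebra_simps)
    ultimately show ?thesis unfolding e
      using lin_aux[of "w * (1 - w\<^sup>2)" "sqrt 2 * w * (1 - w\<^sup>2)" "w\<^sup>2 * (1 - w\<^sup>2)" "(1-w\<^sup>2)\<^sup>2" "w\<^sup>2" "w\<^sup>2*w\<^sup>2"] by blast
  qed
  thus ?thesis using nn real_sqrt_le_mono[of _ "(w + sqrt 2 * (1 - w\<^sup>2)/2)\<^sup>2"] by simp
qed

lemma pointwise: assumes "0 \<le> u" "u \<le> 1"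
  shows "min (1-u) u \<le> 1/2 * (1 - 2 / sqrt 2 * g u)"
proof -
  have c: "2 / sqrt 2 * g u = sqrt (u\<^sup>2 + (1 - u)\<^sup>2) - 2 * sqrt 2 * u * (1-u)"
    unfolding g_def by (simp add: field_simps)
  define w where "w = \<bar>1 - 2*u\<bar>"
  have w: "0 \<le> w" "w \<le> 1" using assms unfolding w_def by auto
  have s: "u\<^sup>2 + (1 - u)\<^sup>2 = (1+w\<^sup>2)/2" unfolding w_def by (simp add: power2_eq_square algebra_simps)
  have v: "u*(1-u) = (1-w\<^sup>2)/4" unfolding w_def by (simp add: power2_eq_square algebra_simps)
  have m: "min (1-u) u = (1-w)/2" unfolding w_def by (auto simp: min_def abs_if)
  have "2 * sqrt 2 * u * (1-u) = 2 * sqrt 2 * (u * (1-u))" by (simp add: algebra_simps)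
  also have "\<dots> = sqrt 2 * (1 - w\<^sup>2)/2" unfolding v by simp
  finally have "2 * sqrt 2 * u * (1-u) = sqrt 2 * (1 - w\<^sup>2)/2" .
  hence c': "2 / sqrt 2 * g u = sqrt ((1+w\<^sup>2)/2) - sqrt 2 * (1 - w\<^sup>2)/2" by (simp only: c s)
  have k: "sqrt ((1+w\<^sup>2)/2) \<le> w + sqrt 2 * (1 - w\<^sup>2)/2" by (rule key[OF w])
  show ?thesis unfolding c' m using k by (simp add: field_simps)
qed

lemma g_bound: assumes "0 \<le> u" "u \<le> 1" shows "\<bar>g u\<bar> \<le> 1"
proof -
  have a: "u\<^sup>2 + (1 - u)\<^sup>2 \<le> 1" using assms mult_left_mono[of u 1 "u"] mult_left_mono[of "1-u" 1 "1-u"]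
    by (simp add: power2_eq_square algebra_simps)
  hence s: "sqrt (u\<^sup>2 + (1 - u)\<^sup>2) \<le> 1" by simp
  have "sqrt 2 \<le> sqrt (2\<^sup>2)" by (rule real_sqrt_le_mono) simp
  hence r: "sqrt 2 / 2 \<le> 1" by simp
  have t1: "0 \<le> sqrt 2 / 2 * sqrt (u\<^sup>2 + (1 - u)\<^sup>2)" by simp
  have t2: "sqrt 2 / 2 * sqrt (u\<^sup>2 + (1 - u)\<^sup>2) \<le> 1" using s r
    by (intro mult_le_one) auto
  have t3: "0 \<le> 2 * u * (1 - u)" using assms by simp
  have t4: "u * (1 - u) \<le> 1/4" using assms
  proof -
    have "0 \<le> (u - 1/2)\<^sup>2" by simp
    also have "(u - 1/2)\<^sup>2 = 1/4 - u * (1 - u)" by (simp add: power2_eq_square algebra_simps)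
    finally show ?thesis by simp
  qed
  show ?thesis unfolding g_def using t1 t2 t3 t4 by linarith
qed

theorem mainTheorem6:
  fixes M :: "'a measure" and p P1 P2 :: "'a \<Rightarrow> real"
  assumes p_meas: "p \<in> borel_measurable M"
    and p_nonneg: "\<And>x. x \<in> space M \<Longrightarrow> p x \<ge> 0"
    and p_int: "integrable M p"
    and p_total: "(LINT x|M. p x) = 1"
    and P1_meas: "P1 \<in> borel_measurable M"
    and P2_meas: "P2 \<in> borel_measurable M"
    and P1_nonneg: "\<And>x. x \<in> space M \<Longrightarrow> P1 x \<ge> 0"
    and P2_nonneg: "\<And>x. x \<in> space M \<Longrightarrow> P2 x \<ge> 0"
    and P_sum: "\<And>x. x \<in> space M \<Longrightarrow> P1 x + P2 x = 1"
  shows "P_e M p P1 P2 \<le> 1/2 * (1 - 2 / sqrt 2 * M_SH M p P2)"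
proof -
  have P2le: "\<And>x. x \<in> space M \<Longrightarrow> P2 x \<le> 1" using P_sum P1_nonneg by force
  have gm: "(\<lambda>x. g (P2 x)) \<in> borel_measurable M" unfolding g_def using P2_meas by measurable
  have gpm: "(\<lambda>x. g (P2 x) * p x) \<in> borel_measurable M" using gm p_meas by measurable
  have gi: "integrable M (\<lambda>x. g (P2 x) * p x)"
  proof (rule Bochner_Integration.integrable_bound[OF p_int gpm], rule AE_I2)
    fix x assume x: "x \<in> space M"
    have "\<bar>g (P2 x)\<bar> * p x \<le> 1 * p x"
      using g_bound[OF P2_nonneg[OF x] P2le[OF x]] p_nonneg[OF x] by (rule mult_right_mono)
    thus "norm (g (P2 x) * p x) \<le> norm (p x)" using p_nonneg[OF x] by (simp add: abs_mult)
  qed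
  have mi: "integrable M (\<lambda>x. min (P1 x) (P2 x) * p x)"
  proof (rule Bochner_Integration.integrable_bound[OF p_int], measurable)
    show "P1 \<in> borel_measurable M" by fact
    show "P2 \<in> borel_measurable M" by fact
    show "p \<in> borel_measurable M" by fact
    show "AE x in M. norm (min (P1 x) (P2 x) * p x) \<le> norm (p x)"
    proof (rule AE_I2)
      fix x assume x: "x \<in> space M"
      have "min (P1 x) (P2 x) * p x \<le> 1 * p x" using P2le[OF x] p_nonneg[OF x]
        by (intro mult_right_mono) auto
      moreover have "0 \<le> min (P1 x) (P2 x) * p x" using P1_nonneg[OF x] P2_nonneg[OF x] p_nonneg[OF x] by simp
      ultimately show "norm (min (P1 x) (P2 x) * p x) \<le> norm (p x)" using p_nonneg[OF x] by simp
    qed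
  qed
  have MSH: "M_SH M p P2 = (LINT x|M. g (P2 x) * p x)"
    unfolding M_SH_def E_X_def
    by (rule Bochner_Integration.integral_cong) (auto simp: fstar_eq P2_nonneg P2le)
  define c where "c = 2 / sqrt 2"
  have "P_e M p P1 P2 = (LINT x|M. min (P1 x) (P2 x) * p x)" unfolding P_e_def E_X_def ..
  also have "\<dots> \<le> (LINT x|M. 1/2 * p x - (1/2 * c) * (g (P2 x) * p x))"
  proof (rule integral_mono[OF mi])
    show "integrable M (\<lambda>x. 1/2 * p x - (1/2 * c) * (g (P2 x) * p x))" using p_int gi by auto
    fix x assume x: "x \<in> space M"
    have "min (1 - P2 x) (P2 x) \<le> 1/2 * (1 - c * g (P2 x))"
      unfolding c_def by (rule pointwise[OF P2_nonneg[OF x] P2le[OF x]])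
    moreover have "P1 x = 1 - P2 x" using P_sum[OF x] by simp
    ultimately have "min (P1 x) (P2 x) * p x \<le> 1/2 * (1 - c * g (P2 x)) * p x"
      using p_nonneg[OF x] by (metis mult_right_mono)
    thus "min (P1 x) (P2 x) * p x \<le> 1/2 * p x - (1/2 * c) * (g (P2 x) * p x)"
      by (simp add: algebra_simps)
  qed
  also have "\<dots> = 1/2 * (LINT x|M. p x) - (1/2*c) * (LINT x|M. g (P2 x) * p x)"
    using p_int gi by simp
  also have "\<dots> = 1/2 * (1 - c * M_SH M p P2)" unfolding MSH p_total by (simp add: algebra_simps)
  finally show ?thesis unfolding c_def .
qed

end
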